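(* Let $n$ be a nonnegative integer and let $x$ be a complex number such that no denominator below vanishes. Then \[ \sum_{k=0}^{2n}(-1)^k\binom{2n}{k}\frac{\binom{x+k}{k}^2}{\binom{x+2n}{k}^2}H_{k}^{\langle2\rangle}(x) =\frac{1}{2}\frac{\binom{x+n}{n}^2\binom{1+2x+2n}{2n}}{\binom{x+2n}{2n}^2\binom{1+2x+n}{n}}H_{n}^{\langle2\rangle}(x). \]
   Context: For complex $z$ and a nonnegative integer $k$, $\binom{z}{k}=\frac{z(z-1)\cdots(z-k+1)}{k!}$ (with $\binom{z}{0}=1$). For complex $x$ and nonnegative integer $m$, $H_0^{\langle 2\rangle}(x)=0$ and $H_m^{\langle 2\rangle}(x)=\sum_{j=1}^m\frac{1}{(x+j)^2}$ for $m\ge1$. The parameter $x$ is assumed to be such that all denominators are nonzero. *)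

theory Defs
  imports "HOL-Analysis.Analysis"
begin

definition H2 :: "nat \<Rightarrow> complex \<Rightarrow> complex" where
  "H2 m x = (\<Sum>j=1..m. 1 / (x + of_nat j)^2)"

end

theory Submission
  imports Defs
begin


definition Pp :: "complex \<Rightarrow> nat \<Rightarrow> complex" where "Pp y k = pochhammer (y+1) k"

lemma Pp_Suc: "Pp y (Suc k) = Pp y k * (y + of_nat k + 1)"
  unfolding Pp_def by (simp add: pochhammer_rec' algebra_simps)

lemma Pp_0[simp]: "Pp y 0 = 1" unfolding Pp_def by simp

definition Mc :: "complex \<Rightarrow> complex \<Rightarrow> complex \<Rightarrow> complex \<Rightarrow> complex" where
 "Mc n k y z = (n+1)*k^2 - (n+1)*(6*n+2*y+2*z+7)*k + (10+4*z+4*y-2*y*z-y*z^2-y^2*z+28*n+8*n*z+8*n*y-n*y*z+26*n^2+4*n^2*z+4*n^2*y+8*n^3)"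

lemma poly_id:
  fixes N K y z :: complex
  shows "(y+z+N+2)*(2*N+1)*(2*N+2)*(y+(2*N-K)+1)*(y+(2*N-K)+2)*(z+(2*N-K)+1)*(z+(2*N-K)+2)
     - 2*(2*N+1)*(y+N+1)*(z+N+1)*(y+z+2*N+2)*(y+z+2*N+3)*((2*N-K)+1)*((2*N-K)+2)
   = -(2*N+1)*((2*N-K)+2)*Mc N (K+1) y z*(y+K+1)*(z+K+1)
   - (2*N+1)*K*Mc N K y z*(y+(2*N-K)+1)*(z+(2*N-K)+1)"
  unfolding Mc_def by algebra

lemma bd_id:
  fixes N y z :: complex
  shows "-(2*N+1)*Mc N (2*N+1) y z + (y+z+N+2)*((y+2*N+2)*(z+2*N+2) - (2*N+2)*(y+1)*(z+1)) = 0"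
  unfolding Mc_def by algebra

lemma rat_id:
  fixes N K Mm y z w c :: complex
  assumes K: "K = 2*N - Mm" and h1: "Mm+1\<noteq>0" and h2: "Mm+2\<noteq>0"
    and w: "w = y+z+N+2" and c: "c = 2*(2*N+1)*(y+N+1)*(z+N+1)*(y+z+2*N+2)*(y+z+2*N+3)"
  shows "w*((2*N+1)/((Mm+1)*(Mm+2))*(2*N+2)*(y+Mm+1)*(y+Mm+2)*(z+Mm+1)*(z+Mm+2)) - c
   = (-(2*N+1)/((Mm+1)*(Mm+2))*(Mm+2)*Mc N (K+1) y z*(y+K+1)*(z+K+1))
   - ((2*N+1)/((Mm+1)*(Mm+2))*K*Mc N K y z*(y+Mm+1)*(z+Mm+1))"
proof -
  have Mm: "Mm = 2*N - K" using K by simp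
  define R where "R = (2*N+1)/((Mm+1)*(Mm+2))"
  have RD: "R*((Mm+1)*(Mm+2)) = 2*N+1" using h1 h2 unfolding R_def by simp
  have D: "(Mm+1)*(Mm+2) \<noteq> 0" using h1 h2 by simp
  have "((Mm+1)*(Mm+2)) * ((w*(R*(2*N+2)*(y+Mm+1)*(y+Mm+2)*(z+Mm+1)*(z+Mm+2)) - c)
   - ((-R*(Mm+2)*Mc N (K+1) y z*(y+K+1)*(z+K+1)) - (R*K*Mc N K y z*(y+Mm+1)*(z+Mm+1)))) = 0"
    using poly_id[of y z N K] RD unfolding w c Mm by algebra
  then have "(w*(R*(2*N+2)*(y+Mm+1)*(y+Mm+2)*(z+Mm+1)*(z+Mm+2)) - c)
   = ((-R*(Mm+2)*Mc N (K+1) y z*(y+K+1)*(z+K+1)) - (R*K*Mc N K y z*(y+Mm+1)*(z+Mm+1)))"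
    using D by simp
  then show ?thesis by (simp only: R_def minus_divide_left)
qed

definition FF :: "complex \<Rightarrow> complex \<Rightarrow> nat \<Rightarrow> nat \<Rightarrow> complex" where
 "FF y z n k = (-1)^k * of_nat (2*n choose k) * Pp y k * Pp y (2*n-k) * Pp z k * Pp z (2*n-k)"

definition GG :: "complex \<Rightarrow> complex \<Rightarrow> nat \<Rightarrow> nat \<Rightarrow> complex" where
 "GG y z n k = (-1)^k * (of_nat (2*n+2 choose k) / (2 * of_nat n+2)) * of_nat k * Mc (of_nat n) (of_nat k) y z
     * Pp y k * Pp y (2*n+1-k) * Pp z k * Pp z (2*n+1-k)"

definition cc :: "complex \<Rightarrow> complex \<Rightarrow> nat \<Rightarrow> complex" where
 "cc y z n = 2*(2* of_nat n+1)*(y+ of_nat n+1)*(z+ of_nat n+1)*(y+z+2* of_nat n+2)*(y+z+2* of_nat n+3)"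

lemma cancel_aux: "(c::complex) \<noteq> 0 \<Longrightarrow> (a*c)/B/c = a/B"
  by (cases "B = 0") (simp_all add: field_simps)

lemma scale_aux: "w*A - c = B - C \<Longrightarrow> w*(E*A) - c*(E::complex) = E*B - E*C"
  by (metis mult.left_commute mult.commute right_diff_distrib)

lemma wz_step:
  assumes "k \<le> 2*n"
  shows "(y+z+ of_nat n+2)*FF y z (Suc n) k - cc y z n * FF y z n k = GG y z n (Suc k) - GG y z n k"
proof -
  obtain m where m: "2*n = k + m" using assms le_Suc_ex by blast
  define N :: complex where "N = of_nat n"
  define K :: complex where "K = of_nat k"
  define Mm :: complex where "Mm = of_nat m"
  have KN: "K = 2*N - Mm" unfolding K_def N_def Mm_def
    using arg_cong[OF m, of "of_nat :: nat \<Rightarrow> complex"] by simp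
  have h1: "Mm+1 \<noteq> 0"
  proof -
    have "(of_nat (m+1)::complex) \<noteq> 0" by (subst of_nat_eq_0_iff) simp
    moreover have "(of_nat (m+1)::complex) = Mm+1" unfolding Mm_def by simp
    ultimately show ?thesis by (metis add.commute)
  qed
  have h2: "Mm+2 \<noteq> 0"
  proof -
    have "(of_nat (m+2)::complex) \<noteq> 0" by (subst of_nat_eq_0_iff) simp
    moreover have "(of_nat (m+2)::complex) = Mm+2" unfolding Mm_def by simp
    ultimately show ?thesis by (metis add.commute)
  qed
  have hN: "N+1 \<noteq> 0"
  proof -
    have "(of_nat (n+1)::complex) \<noteq> 0" by (subst of_nat_eq_0_iff) simp
    moreover have "(of_nat (n+1)::complex) = N+1" unfolding N_def by simp
    ultimately show ?thesis by (metis add.commute)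
  qed
  have fk: "fact k \<noteq> (0::complex)" "fact m \<noteq> (0::complex)" by simp_all
  define E where "E = (-1)^k * (fact (2*n) / (fact k * fact m)) * Pp y k * Pp y m * Pp z k * Pp z m"
  have f2: "(fact (2*n+2) :: complex) = fact (2*n) * (2*N+1) * (2*N+2)"
    unfolding N_def by (simp add: fact_Suc algebra_simps)
  have fm2: "(fact (Suc (Suc m)) :: complex) = fact m * (Mm+1) * (Mm+2)"
    unfolding Mm_def by (simp add: fact_Suc algebra_simps)
  have fm1: "(fact (Suc m) :: complex) = fact m * (Mm+1)"
    unfolding Mm_def by (simp add: fact_Suc algebra_simps)
  have fk1: "(fact (Suc k) :: complex) = fact k * (K+1)"
    unfolding K_def by (simp add: fact_Suc algebra_simps)
  have b0: "(of_nat (2*n choose k) :: complex) = fact (2*n) / (fact k * fact m)"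
    using assms m by (simp add: binomial_fact)
  have b1: "(of_nat (2*n+2 choose k) :: complex) = fact (2*n+2) / (fact k * fact (Suc (Suc m)))"
    using assms m by (subst binomial_fact) (simp_all add: Suc_diff_le)
  have b2: "(of_nat (2*n+2 choose Suc k) :: complex) = fact (2*n+2) / (fact (Suc k) * fact (Suc m))"
    using assms m by (subst binomial_fact) (simp_all add: Suc_diff_le)
  have d1: "2 * Suc n - k = Suc (Suc m)" "2*n - k = m" "2*n+1-k = Suc m" "2*n+1 - Suc k = m"
    using m by simp_all
  have e1: "FF y z (Suc n) k = E * ((2*N+1)/((Mm+1)*(Mm+2))*(2*N+2)*(y+Mm+1)*(y+Mm+2)*(z+Mm+1)*(z+Mm+2))"
  proof -
    have "FF y z (Suc n) k = (-1)^k * of_nat (2*n+2 choose k) * Pp y k * Pp y (Suc (Suc m)) * Pp z k * Pp z (Suc (Suc m))"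
      unfolding FF_def d1(1) by simp
    also have "\<dots> = E * ((2*N+1)/((Mm+1)*(Mm+2))*(2*N+2)*(y+Mm+1)*(y+Mm+2)*(z+Mm+1)*(z+Mm+2))"
      unfolding b1 f2 fm2 Pp_Suc E_def using h1 h2 fk unfolding Mm_def
      by (simp add: field_simps)
    finally show ?thesis .
  qed
  have e2: "FF y z n k = E" unfolding FF_def E_def d1 b0 by simp
  have hN2: "2*N+2 \<noteq> 0" using hN by (metis mult_2 add.assoc add.commute add_cancel_right_right one_add_one mult_eq_0_iff zero_neq_numeral distrib_left mult_1_right)
  have bb1: "(of_nat (2*n+2 choose k) :: complex) / (2*N+2) = fact (2*n) * (2*N+1) / (fact k * (fact m * (Mm+1) * (Mm+2)))"
    unfolding b1 f2 fm2 by (rule cancel_aux[OF hN2])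
  have bb2: "(of_nat (2*n+2 choose Suc k) :: complex) / (2*N+2) = fact (2*n) * (2*N+1) / (fact k * (K+1) * (fact m * (Mm+1)))"
    unfolding b2 f2 fm1 fk1 by (rule cancel_aux[OF hN2])
  have e3: "GG y z n k = E * ((2*N+1)/((Mm+1)*(Mm+2))*K*Mc N K y z*(y+Mm+1)*(z+Mm+1))"
  proof -
    have "GG y z n k = (-1)^k * (of_nat (2*n+2 choose k) / (2*N+2))
        * K * Mc N K y z * Pp y k * (Pp y m * (y+Mm+1)) * Pp z k * (Pp z m * (z+Mm+1))"
      unfolding GG_def d1 Pp_Suc N_def K_def Mm_def by simp
    also have "\<dots> = E * ((2*N+1)/((Mm+1)*(Mm+2))*K*Mc N K y z*(y+Mm+1)*(z+Mm+1))"
      unfolding bb1 E_def using h1 h2 fk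
      by (simp add: field_simps)
    finally show ?thesis .
  qed
  have hK: "K+1 \<noteq> 0"
  proof -
    have "(of_nat (k+1)::complex) \<noteq> 0" by (subst of_nat_eq_0_iff) simp
    moreover have "(of_nat (k+1)::complex) = K+1" unfolding K_def by simp
    ultimately show ?thesis by (metis add.commute)
  qed
  have bb2': "(of_nat (2*n+2 choose Suc k) :: complex) / (2*N+2) * (K+1) = fact (2*n) * (2*N+1) / (fact k * (fact m * (Mm+1)))"
    unfolding bb2 using hK by simp
  have e4: "GG y z n (Suc k) = E * (-(2*N+1)/(Mm+1)*Mc N (K+1) y z*(y+K+1)*(z+K+1))"
  proof -
    have "GG y z n (Suc k) = - ((-1)^k * (of_nat (2*n+2 choose Suc k) / (2*N+2) * (K+1)) * Mc N (K+1) y z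
      * (Pp y k * (y+K+1)) * Pp y m * (Pp z k * (z+K+1)) * Pp z m)"
      unfolding GG_def d1 Pp_Suc K_def N_def of_nat_Suc by (simp add: add.commute mult.assoc del: binomial_Suc_Suc)
    also have "\<dots> = E * (-(2*N+1)/(Mm+1)*Mc N (K+1) y z*(y+K+1)*(z+K+1))"
      unfolding bb2' E_def unfolding divide_inverse inverse_mult_distrib by algebra
    finally show ?thesis .
  qed
  have canc: "-(2*N+1)/((Mm+1)*(Mm+2))*(Mm+2) = -(2*N+1)/(Mm+1)" using h2 by simp
  have "(y+z+N+2)*((2*N+1)/((Mm+1)*(Mm+2))*(2*N+2)*(y+Mm+1)*(y+Mm+2)*(z+Mm+1)*(z+Mm+2)) - cc y z n
   = (-(2*N+1)/((Mm+1)*(Mm+2))*(Mm+2)*Mc N (K+1) y z*(y+K+1)*(z+K+1))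
   - ((2*N+1)/((Mm+1)*(Mm+2))*K*Mc N K y z*(y+Mm+1)*(z+Mm+1))"
    by (rule rat_id[OF KN h1 h2 refl]) (simp add: cc_def N_def)
  then have "(y+z+N+2)*((2*N+1)/((Mm+1)*(Mm+2))*(2*N+2)*(y+Mm+1)*(y+Mm+2)*(z+Mm+1)*(z+Mm+2)) - cc y z n
   = (-(2*N+1)/(Mm+1)*Mc N (K+1) y z*(y+K+1)*(z+K+1))
   - ((2*N+1)/((Mm+1)*(Mm+2))*K*Mc N K y z*(y+Mm+1)*(z+Mm+1))" unfolding canc .
  then show ?thesis unfolding e1 e2 e3 e4 N_def[symmetric]
    by (rule scale_aux)
qed



definition ss :: "complex \<Rightarrow> complex \<Rightarrow> nat \<Rightarrow> complex" where
  "ss y z n = (\<Sum>k=0..2*n. FF y z n k)"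

lemma GG_0: "GG y z n 0 = 0" unfolding GG_def by simp

lemma boundary:
  "GG y z n (Suc (2*n)) + (y+z+ of_nat n+2) * (FF y z (Suc n) (Suc (2*n)) + FF y z (Suc n) (Suc (Suc (2*n)))) = 0"
proof -
  define N :: complex where "N = of_nat n"
  define Q where "Q = Pp y (Suc (2*n)) * Pp z (Suc (2*n))"
  have hN2: "2*N+2 \<noteq> 0"
  proof -
    have "(of_nat (2*n+2)::complex) \<noteq> 0" by (subst of_nat_eq_0_iff) simp
    moreover have "(of_nat (2*n+2)::complex) = 2*N+2" unfolding N_def by simp
    ultimately show ?thesis by (metis add.commute)
  qed
  have g: "GG y z n (Suc (2*n)) = - ((2*N+1) * Mc N (2*N+1) y z) * Q"
  proof -
    have g0: "GG y z n (Suc (2*n)) = -(of_nat (2*n+2 choose Suc (2*n)) / (2*N+2)) * of_nat (Suc (2*n)) * Mc N (of_nat (Suc (2*n))) y z * Q"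
      unfolding GG_def Q_def N_def by (simp add: mult_ac del: of_nat_Suc)
    have bn: "Suc (Suc (2*n)) choose Suc (2*n) = Suc (Suc (2*n))"
      using binomial_symmetric[of "Suc (2*n)" "Suc (Suc (2*n))"] by simp
    have bc: "(of_nat (2*n+2 choose Suc (2*n)) :: complex) = 2*N+2"
    proof -
      have "2*n+2 = Suc (Suc (2*n))" by simp
      then show ?thesis using bn unfolding N_def by simp
    qed
    have os: "(of_nat (Suc (2*n)) :: complex) = 2*N+1" by (simp add: N_def)
    show ?thesis unfolding g0 bc os using hN2 by (simp add: algebra_simps)
  qed
  have f1: "FF y z (Suc n) (Suc (2*n)) = - ((2*N+2)*(y+1)*(z+1)) * Q"
    unfolding FF_def Q_def N_def by (simp add: Pp_Suc algebra_simps)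
  have f2: "FF y z (Suc n) (Suc (Suc (2*n))) = ((y+2*N+2)*(z+2*N+2)) * Q"
  proof -
    have "2 * Suc n = Suc (Suc (2*n))" by simp
    then show ?thesis
      unfolding FF_def Q_def N_def by (simp add: Pp_Suc mult_ac add_ac)
  qed
  show ?thesis unfolding g f1 f2 N_def[symmetric]
    using bd_id[of N y z] by algebra
qed

lemma dixon_rec: "(y+z+ of_nat n+2) * ss y z (Suc n) = cc y z n * ss y z n"
proof -
  define w where "w = y+z+ of_nat n+2"
  have tel: "(\<Sum>k=0..2*n. w*FF y z (Suc n) k - cc y z n * FF y z n k) = GG y z n (Suc (2*n))"
  proof -
    have "(\<Sum>k=0..2*n. w*FF y z (Suc n) k - cc y z n * FF y z n k) = (\<Sum>k=0..2*n. GG y z n (Suc k) - GG y z n k)"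
      by (rule sum.cong) (auto simp: w_def intro: wz_step)
    also have "\<dots> = GG y z n (Suc (2*n)) - GG y z n 0" by (rule sum_Suc_diff) simp
    finally show ?thesis by (simp add: GG_0)
  qed
  have s1: "ss y z (Suc n) = (\<Sum>k=0..2*n. FF y z (Suc n) k) + FF y z (Suc n) (Suc (2*n)) + FF y z (Suc n) (Suc (Suc (2*n)))"
  proof -
    have "2 * Suc n = Suc (Suc (2*n))" by simp
    then show ?thesis unfolding ss_def by simp
  qed
  have "w * ss y z (Suc n) - cc y z n * ss y z n
      = (\<Sum>k=0..2*n. w*FF y z (Suc n) k - cc y z n * FF y z n k) + w * (FF y z (Suc n) (Suc (2*n)) + FF y z (Suc n) (Suc (Suc (2*n))))"
    unfolding s1 ss_def by (simp add: sum_subtractf sum_distrib_left algebra_simps)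
  also have "\<dots> = GG y z n (Suc (2*n)) + w * (FF y z (Suc n) (Suc (2*n)) + FF y z (Suc n) (Suc (Suc (2*n))))"
    by (simp only: tel)
  also have "\<dots> = 0" unfolding w_def by (rule boundary)
  finally show ?thesis unfolding w_def by simp
qed

lemma poch_aux: "pochhammer (w+1) (Suc n) * w = pochhammer w n * (w + of_nat n) * (w + of_nat n + 1)"
proof -
  have "pochhammer w (Suc (Suc n)) = w * pochhammer (w+1) (Suc n)" by (rule pochhammer_rec)
  moreover have "pochhammer w (Suc (Suc n)) = (w + of_nat (Suc n)) * ((w + of_nat n) * pochhammer w n)"
    by (simp add: pochhammer_rec')
  ultimately show ?thesis by (simp add: algebra_simps)
qed

lemma dixon:
  "(\<forall>j<n. y+z+ of_nat j+2 \<noteq> 0) \<Longrightarrow>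
   ss y z n = fact (2*n) / fact n * Pp y n * Pp z n * pochhammer (y+z+ of_nat n+2) n"
proof (induction n)
  case 0
  then show ?case unfolding ss_def FF_def by simp
next
  case (Suc n)
  define w where "w = y+z+ of_nat n+2"
  have wnz: "w \<noteq> 0" using Suc.prems unfolding w_def by auto
  have IH: "ss y z n = fact (2*n) / fact n * Pp y n * Pp z n * pochhammer w n"
    using Suc by (simp add: w_def)
  have rec: "w * ss y z (Suc n) = cc y z n * ss y z n" unfolding w_def by (rule dixon_rec)
  have pa: "pochhammer (y+z+ of_nat (Suc n)+2) (Suc n) * w = pochhammer w n * (w + of_nat n) * (w + of_nat n + 1)"
  proof -
    have e: "y+z+ of_nat (Suc n)+2 = w+1" unfolding w_def by simp
    show ?thesis unfolding e by (rule poch_aux)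
  qed
  have f: "(fact (2 * Suc n) :: complex) = fact (2*n) * (2* of_nat n+1) * (2* of_nat n+2)"
    by (simp add: fact_Suc algebra_simps)
  have f1: "(fact (Suc n) :: complex) = fact n * (of_nat n + 1)" by (simp add: fact_Suc algebra_simps)
  have n1: "(of_nat n + 1 :: complex) \<noteq> 0"
  proof -
    have "(of_nat (n+1)::complex) \<noteq> 0" by (subst of_nat_eq_0_iff) simp
    then show ?thesis by (metis of_nat_Suc add.commute Suc_eq_plus1)
  qed
  have "w * ss y z (Suc n) = w * (fact (2 * Suc n) / fact (Suc n) * Pp y (Suc n) * Pp z (Suc n) * pochhammer (y+z+ of_nat (Suc n)+2) (Suc n))"
  proof -
    have "w * (fact (2 * Suc n) / fact (Suc n) * Pp y (Suc n) * Pp z (Suc n) * pochhammer (y+z+ of_nat (Suc n)+2) (Suc n))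
       = (fact (2 * Suc n) / fact (Suc n) * Pp y (Suc n) * Pp z (Suc n)) * (pochhammer (y+z+ of_nat (Suc n)+2) (Suc n) * w)"
      by (simp add: mult_ac)
    also have "\<dots> = cc y z n * (fact (2*n) / fact n * Pp y n * Pp z n * pochhammer w n)"
    proof -
      have inv: "(of_nat n+1) * inverse (of_nat n+1) = (1::complex)" using n1 by simp
      show ?thesis
        unfolding pa f f1 Pp_Suc cc_def unfolding w_def divide_inverse inverse_mult_distrib
        using inv by algebra
    qed
    finally show ?thesis unfolding rec IH by simp
  qed
  then show ?case using wnz by (metis mult_left_cancel)
qed



definition Qf :: "complex \<Rightarrow> nat \<Rightarrow> complex \<Rightarrow> complex" where
  "Qf x m t = (\<Prod>i<m. (x + of_nat i + 1)^2 - t)"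

lemma Pp_mult: "Pp (x+e) m * Pp (x-e) m = Qf x m (e^2)"
  unfolding Pp_def Qf_def pochhammer_prod atLeast0LessThan prod.distrib[symmetric]
  by (rule prod.cong) (simp_all add: power2_eq_square algebra_simps)

lemma Qf_0: "Qf x m 0 = Pp x m ^ 2"
  using Pp_mult[of x 0 m] by (simp add: power2_eq_square)

lemma dixon_Q:
  assumes "\<forall>j<n. 2*x + of_nat j + 2 \<noteq> 0"
  shows "(\<Sum>k=0..2*n. (-1)^k * of_nat (2*n choose k) * (Qf x k t * Qf x (2*n-k) t))
       = fact (2*n) / fact n * pochhammer (2*x + of_nat n + 2) n * Qf x n t"
proof -
  obtain e where e: "t = e^2" using power2_csqrt by metis
  have s: "(x+e)+(x-e) = 2*x" by simp
  have h: "\<forall>j<n. (x+e)+(x-e)+ of_nat j+2 \<noteq> 0" unfolding s using assms by simp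
  have d: "ss (x+e) (x-e) n = fact (2*n) / fact n * Pp (x+e) n * Pp (x-e) n * pochhammer ((x+e)+(x-e)+ of_nat n+2) n"
    by (rule dixon[OF h])
  have l: "ss (x+e) (x-e) n = (\<Sum>k=0..2*n. (-1)^k * of_nat (2*n choose k) * (Qf x k t * Qf x (2*n-k) t))"
    unfolding ss_def FF_def e Pp_mult[symmetric] by (rule sum.cong) (simp_all add: mult_ac)
  have r: "fact (2*n) / fact n * Pp (x+e) n * Pp (x-e) n * pochhammer ((x+e)+(x-e)+ of_nat n+2) n
     = fact (2*n) / fact n * pochhammer (2*x + of_nat n + 2) n * Qf x n t"
    unfolding s e Pp_mult[symmetric] by (simp add: mult_ac)
  show ?thesis using d l r by simp
qed

lemma Q_deriv:
  assumes "\<forall>j. 1 \<le> j \<and> j \<le> m \<longrightarrow> x + of_nat j \<noteq> 0"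
  shows "(Qf x m has_field_derivative -(Qf x m 0 * H2 m x)) (at 0)"
  using assms
proof (induction m)
  case 0
  have "Qf x 0 = (\<lambda>_. 1)" unfolding Qf_def by auto
  moreover have "H2 0 x = 0" unfolding H2_def by simp
  ultimately show ?case by simp
next
  case (Suc m)
  define a where "a = (x + of_nat m + 1)^2"
  have anz: "a \<noteq> 0"
  proof -
    have "x + of_nat (Suc m) \<noteq> 0" using Suc.prems by auto
    then show ?thesis unfolding a_def by (simp add: add_ac)
  qed
  have IH: "(Qf x m has_field_derivative -(Qf x m 0 * H2 m x)) (at 0)"
    using Suc.IH Suc.prems by auto
  have fe: "Qf x (Suc m) = (\<lambda>t. Qf x m t * (a - t))" unfolding Qf_def a_def by (simp add: fun_eq_iff)
  have d: "((\<lambda>t. Qf x m t * (a - t)) has_field_derivative (-(Qf x m 0 * H2 m x)) * (a - 0) + (0 - 1) * Qf x m 0) (at 0)"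
    by (intro DERIV_mult IH DERIV_diff DERIV_const DERIV_ident)
  have H: "H2 (Suc m) x = H2 m x + 1/a" unfolding H2_def a_def by (simp add: add_ac)
  have Q0: "Qf x (Suc m) 0 = Qf x m 0 * a" unfolding fe by simp
  show ?case unfolding fe[symmetric]
    by (rule DERIV_cong[OF d[folded fe]]) (simp add: Q0 H anz field_simps)
qed



lemma final_alg:
  fixes a b pa pb Pn P H :: complex
  assumes "a \<noteq> 0" "b \<noteq> 0" "P \<noteq> 0" "pa \<noteq> 0"
  shows "(b/a*pb*Pn^2*H/2)/P^2 = 1/2*((Pn/a)^2*(pa*pb/b))/((P/b)^2*(pa/a))*H"
  using assms by (simp add: field_simps power2_eq_square)

theorem theorem2:
  fixes n :: nat and x :: complex
  assumes hx: "\<And>j. 1 \<le> j \<Longrightarrow> j \<le> 2*n \<Longrightarrow> x + of_nat j \<noteq> 0"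
    and hb: "\<And>k. k \<le> 2*n \<Longrightarrow> (x + of_nat (2*n)) gchoose k \<noteq> 0"
    and hc: "(1 + 2*x + of_nat n) gchoose n \<noteq> 0"
  shows "(\<Sum>k=0..2*n. (-1)^k * of_nat (2*n choose k)
            * ((x + of_nat k) gchoose k)^2 / ((x + of_nat (2*n)) gchoose k)^2 * H2 k x)
       = 1/2 * (((x + of_nat n) gchoose n)^2 * ((1 + 2*x + of_nat (2*n)) gchoose (2*n)))
           / (((x + of_nat (2*n)) gchoose (2*n))^2 * ((1 + 2*x + of_nat n) gchoose n)) * H2 n x"
proof -
  define K where "K = fact (2*n) / fact n * pochhammer (2*x + of_nat n + 2) n"
  define c where "c k = ((-1)^k * of_nat (2*n choose k) :: complex)" for k
  have hPp: "Pp x m \<noteq> 0" if "m \<le> 2*n" for m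
  proof
    assume "Pp x m = 0"
    then obtain j where j: "j < m" "x + 1 = - of_nat j" unfolding Pp_def pochhammer_eq_0_iff by blast
    have "x + of_nat (Suc j) = (x + 1) + of_nat j" by (simp add: add_ac)
    also have "\<dots> = 0" using j(2) by simp
    finally have "x + of_nat (Suc j) = 0" .
    moreover have "1 \<le> Suc j" "Suc j \<le> 2*n" using j that by auto
    ultimately show False using hx by blast
  qed
  have pa: "pochhammer (2*x+2) n \<noteq> 0"
  proof -
    have "(1 + 2*x + of_nat n) gchoose n = pochhammer (2*x+2) n / fact n"
      by (simp add: gbinomial_pochhammer' add_ac)
    then show ?thesis using hc by auto
  qed
  have hc': "\<forall>j<n. 2*x + of_nat j + 2 \<noteq> 0"
  proof (intro allI impI notI)
    fix j assume j: "j < n" "2*x + of_nat j + 2 = 0"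
    then have "(2*x+2) + of_nat j = 0" by (simp add: add_ac)
    then have "2*x+2 = - of_nat j" by (simp only: eq_neg_iff_add_eq_0)
    then have "pochhammer (2*x+2) n = 0" using j(1) unfolding pochhammer_eq_0_iff by blast
    then show False using pa by simp
  qed
  have hj: "\<forall>j. 1 \<le> j \<and> j \<le> m \<longrightarrow> x + of_nat j \<noteq> 0" if "m \<le> 2*n" for m
    using hx that by auto
  define L where "L t = (\<Sum>k=0..2*n. c k * (Qf x k t * Qf x (2*n-k) t))" for t
  have LR: "L = (\<lambda>t. K * Qf x n t)"
    unfolding L_def c_def K_def using dixon_Q[OF hc'] by (simp add: fun_eq_iff)
  have DL: "(L has_field_derivative
      (\<Sum>k=0..2*n. c k * (-(Qf x k 0 * H2 k x) * Qf x (2*n-k) 0 + -(Qf x (2*n-k) 0 * H2 (2*n-k) x) * Qf x k 0))) (at 0)"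
    unfolding L_def
    by (intro DERIV_sum DERIV_cmult DERIV_mult Q_deriv hj) auto
  have DR: "((\<lambda>t. K * Qf x n t) has_field_derivative K * (-(Qf x n 0 * H2 n x))) (at 0)"
    by (intro DERIV_cmult Q_deriv hj) auto
  have eq: "(\<Sum>k=0..2*n. c k * (-(Qf x k 0 * H2 k x) * Qf x (2*n-k) 0 + -(Qf x (2*n-k) 0 * H2 (2*n-k) x) * Qf x k 0))
      = K * (-(Qf x n 0 * H2 n x))"
    using DERIV_unique[OF DL DR[folded LR]] .
  define T where "T k = c k * Qf x k 0 * Qf x (2*n-k) 0" for k
  have eq2: "(\<Sum>k=0..2*n. T k * H2 k x) + (\<Sum>k=0..2*n. T k * H2 (2*n-k) x) = K * Qf x n 0 * H2 n x"
  proof -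
    have "(\<Sum>k=0..2*n. c k * (-(Qf x k 0 * H2 k x) * Qf x (2*n-k) 0 + -(Qf x (2*n-k) 0 * H2 (2*n-k) x) * Qf x k 0))
        = - ((\<Sum>k=0..2*n. T k * H2 k x) + (\<Sum>k=0..2*n. T k * H2 (2*n-k) x))"
      unfolding T_def sum.distrib[symmetric] sum_negf[symmetric]
      by (rule sum.cong) (simp_all add: algebra_simps)
    then have "- ((\<Sum>k=0..2*n. T k * H2 k x) + (\<Sum>k=0..2*n. T k * H2 (2*n-k) x)) = K * (-(Qf x n 0 * H2 n x))"
      using eq by simp
    then show ?thesis by (simp add: algebra_simps)
  qed
  have csym: "c (2*n-k) = c k" if "k \<le> 2*n" for k
  proof -
    have "(-1::complex)^(2*n-k) = (-1)^k"
      using that by (cases "even k") (simp_all add: power_diff)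
    moreover have "2*n choose (2*n-k) = 2*n choose k" using that by (simp add: binomial_symmetric[symmetric])
    ultimately show ?thesis unfolding c_def by simp
  qed
  have sym: "(\<Sum>k=0..2*n. T k * H2 (2*n-k) x) = (\<Sum>k=0..2*n. T k * H2 k x)"
  proof -
    have "(\<Sum>k=0..2*n. T k * H2 k x) = (\<Sum>k=0..2*n. T (2*n+0-k) * H2 (2*n+0-k) x)"
      by (rule sum.atLeastAtMost_rev)
    also have "\<dots> = (\<Sum>k=0..2*n. T k * H2 (2*n-k) x)"
    proof (rule sum.cong)
      fix k assume "k \<in> {0..2*n}"
      then have k: "k \<le> 2*n" by simp
      have kk: "2*n-(2*n-k) = k" using k by simp
      have "T (2*n-k) = c k * Qf x (2*n-k) 0 * Qf x k 0" unfolding T_def kk csym[OF k] ..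
      also have "\<dots> = T k" unfolding T_def by (simp add: mult_ac)
      finally have "T (2*n-k) = T k" .
      then show "T (2*n+0-k) * H2 (2*n+0-k) x = T k * H2 (2*n-k) x" by simp
    qed simp
    finally show ?thesis by simp
  qed
  have S: "(\<Sum>k=0..2*n. T k * H2 k x) = K * Qf x n 0 * H2 n x / 2"
    using eq2 unfolding sym by (simp add: mult.commute)
  have P2n: "Pp x (2*n) \<noteq> 0" using hPp by simp
  have g1: "(x + of_nat k) gchoose k = Pp x k / fact k" for k
    unfolding Pp_def by (simp add: gbinomial_pochhammer')
  have g2: "(x + of_nat (2*n)) gchoose k = Pp x (2*n) / (Pp x (2*n-k) * fact k)" if "k \<le> 2*n" for k
  proof -
    have p: "Pp x (2*n) = Pp x (2*n-k) * pochhammer (x + 1 + of_nat (2*n-k)) k"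
      unfolding Pp_def pochhammer_product'[symmetric] using that by simp
    have e: "x + of_nat (2*n) - of_nat k + 1 = x + 1 + of_nat (2*n-k)"
      using that by (simp add: of_nat_diff)
    have "pochhammer (x + of_nat (2*n) - of_nat k + 1) k = Pp x (2*n) / Pp x (2*n-k)"
      unfolding e p using hPp[of "2*n-k"] by simp
    then show ?thesis by (simp add: gbinomial_pochhammer')
  qed
  have hterm: "c k * ((x + of_nat k) gchoose k)^2 / ((x + of_nat (2*n)) gchoose k)^2 * H2 k x
      = T k * H2 k x / Pp x (2*n)^2" if "k \<le> 2*n" for k
    unfolding g1 g2[OF that] T_def Qf_0 using hPp[OF that] hPp[of "2*n-k"] P2n
    by (simp add: field_simps)
  have lhs: "(\<Sum>k=0..2*n. (-1)^k * of_nat (2*n choose k)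
            * ((x + of_nat k) gchoose k)^2 / ((x + of_nat (2*n)) gchoose k)^2 * H2 k x)
      = (\<Sum>k=0..2*n. T k * H2 k x) / Pp x (2*n)^2"
    unfolding sum_divide_distrib c_def[symmetric] by (intro sum.cong refl hterm) simp
  have g3: "(1 + 2*x + of_nat (2*n)) gchoose (2*n) = pochhammer (2*x+2) n * pochhammer (2*x + of_nat n + 2) n / fact (2*n)"
  proof -
    have a1: "(1 + 2*x + of_nat (2*n)) gchoose (2*n) = pochhammer (2*x+2) (2*n) / fact (2*n)"
      by (simp add: gbinomial_pochhammer' add_ac)
    have nn: "2*n = n+n" by simp
    have bb: "2*x+2 + of_nat n = 2*x + of_nat n + 2" by (simp add: add_ac)
    have "pochhammer (2*x+2) (2*n) = pochhammer (2*x+2) n * pochhammer (2*x + of_nat n + 2) n"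
      unfolding nn pochhammer_product' bb ..
    then show ?thesis unfolding a1 by simp
  qed
  have g4: "(1 + 2*x + of_nat n) gchoose n = pochhammer (2*x+2) n / fact n"
    by (simp add: gbinomial_pochhammer' add_ac)
  show ?thesis unfolding lhs S K_def Qf_0 unfolding g1 g3 g4
    by (rule final_alg[OF _ _ P2n pa]) simp_all
qed


end
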